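(* Let $d \ge 1$, $\sigma>0$, $M>0$, and let $k:\mathbb{R}^d \to [0,M]$ be a (measurable) non-negative bounded function that is continuous almost everywhere. Define $g:\mathbb{R}^d\to\mathbb{R}$ by $$g(\mu) = \mathbb{E}_{w\sim\mathcal{N}(\mu,\sigma^2 I)}[k(w)] = \int_{\mathbb{R}^d} \frac{1}{(2\pi\sigma^2)^{d/2}} e^{-\frac{\|w-\mu\|^2}{2\sigma^2}} k(w)\,dw .$$ Then $g$ is twice differentiable and for all $\mu_1,\mu_2\in\mathbb{R}^d$, $$\nabla g(\mu_1)^\top \big(\nabla^2 g(\mu_2)\big)\nabla g(\mu_1) \le \frac{d M^3}{\sigma^4}.$$
   Context: $\mathcal{N}(\mu,\sigma^2 I)$ denotes the Gaussian distribution on $\mathbb{R}^d$ with mean $\mu$ and covariance $\sigma^2 I$; $\nabla g$ and $\nabla^2 g$ denote the gradient and Hessian of $g$; $\|\cdot\|$ is the Euclidean norm. *)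

theory Defs
  imports "HOL-Analysis.Analysis"
begin

definition gauss_iso_density :: "'a::euclidean_space \<Rightarrow> real \<Rightarrow> 'a \<Rightarrow> real" where
  "gauss_iso_density \<mu> \<sigma> w =
     (2 * pi * \<sigma>\<^sup>2) powr (- real DIM('a) / 2) * exp (- (norm (w - \<mu>))\<^sup>2 / (2 * \<sigma>\<^sup>2))"

end

theory Submission
  imports Defs "HOL-Probability.Distributions"
begin

lemma gauss_prod:
  fixes x w :: "'a::euclidean_space"
  assumes "s > 0"
  shows "gauss_iso_density x s w = (\<Prod>b\<in>Basis. normal_density (x\<bullet>b) s (w\<bullet>b))"
proof -
  have n: "(norm (w - x))\<^sup>2 = (\<Sum>b\<in>Basis. (w\<bullet>b - x\<bullet>b)\<^sup>2)"
  proof -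
    have "(norm (w - x))\<^sup>2 = (w-x)\<bullet>(w-x)" by (simp add: power2_norm_eq_inner)
    also have "\<dots> = (\<Sum>b\<in>Basis. ((w-x)\<bullet>b) * ((w-x)\<bullet>b))" by (rule euclidean_inner)
    finally show ?thesis by (simp add: inner_diff_left power2_eq_square)
  qed
  have p: "0 < 2 * pi * s\<^sup>2" using assms by simp
  have c: "(2 * pi * s\<^sup>2) powr (- real DIM('a) / 2) = (1 / sqrt (2 * pi * s\<^sup>2)) ^ DIM('a)"
  proof -
    have "(1 / sqrt (2 * pi * s\<^sup>2)) = (2 * pi * s\<^sup>2) powr (-(1/2))"
      using p by (simp add: powr_minus_divide powr_half_sqrt)
    then have "(1 / sqrt (2 * pi * s\<^sup>2)) ^ DIM('a) = ((2 * pi * s\<^sup>2) powr (-(1/2))) powr (real DIM('a))"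
      using p by (subst powr_realpow) auto
    also have "\<dots> = (2 * pi * s\<^sup>2) powr (- real DIM('a) / 2)"
      by (simp add: powr_powr)
    finally show ?thesis by simp
  qed
  have "(\<Prod>b\<in>Basis. normal_density (x\<bullet>b) s (w\<bullet>b))
      = (\<Prod>b\<in>(Basis::'a set). 1 / sqrt (2 * pi * s\<^sup>2)) * (\<Prod>b\<in>Basis. exp (-(w\<bullet>b - x\<bullet>b)\<^sup>2 / (2 * s\<^sup>2)))"
    unfolding normal_density_def by (rule prod.distrib)
  also have "(\<Prod>b\<in>(Basis::'a set). 1 / sqrt (2 * pi * s\<^sup>2)) = (1 / sqrt (2 * pi * s\<^sup>2)) ^ DIM('a)"
    by (rule prod_constant)
  also have "(\<Prod>b\<in>Basis. exp (-(w\<bullet>b - x\<bullet>b)\<^sup>2 / (2 * s\<^sup>2))) = exp (\<Sum>b\<in>Basis. -(w\<bullet>b - x\<bullet>b)\<^sup>2 / (2 * s\<^sup>2))"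
    by (simp add: exp_sum)
  also have "(\<Sum>b\<in>Basis. -(w\<bullet>b - x\<bullet>b)\<^sup>2 / (2 * s\<^sup>2)) = - (norm (w - x))\<^sup>2 / (2 * s\<^sup>2)"
    unfolding n by (simp add: sum_divide_distrib[symmetric] sum_negf)
  finally show ?thesis unfolding gauss_iso_density_def c by simp
qed

lemma gauss_meas[measurable]: "(\<lambda>w. gauss_iso_density x s w) \<in> borel_measurable borel"
  unfolding gauss_iso_density_def by measurable

lemma gauss_nonneg: "0 \<le> gauss_iso_density x s w"
  unfolding gauss_iso_density_def by simp

lemma gauss_nn:
  fixes x :: "'a::euclidean_space"
  assumes "s > 0"
  shows "(\<integral>\<^sup>+w. ennreal (gauss_iso_density x s w) \<partial>lborel) = 1"
proof -
  have "(\<integral>\<^sup>+w. ennreal (gauss_iso_density x s w) \<partial>lborel)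
      = (\<integral>\<^sup>+w. (\<Prod>b\<in>Basis. ennreal (normal_density (x\<bullet>b) s (w\<bullet>b))) \<partial>lborel)"
    using assms by (simp add: gauss_prod prod_ennreal)
  also have "\<dots> = (\<Prod>b\<in>Basis. (\<integral>\<^sup>+t. ennreal (normal_density (x\<bullet>b) s t) \<partial>lborel))"
    by (rule nn_integral_lborel_prod) auto
  also have "\<dots> = 1"
  proof (rule prod.neutral, intro ballI)
    fix b :: 'a
    show "(\<integral>\<^sup>+t. ennreal (normal_density (x\<bullet>b) s t) \<partial>lborel) = 1"
      using assms by (subst nn_integral_eq_integral) auto
  qed
  finally show ?thesis .
qed

lemma gauss_meas_lborel[measurable]: "(\<lambda>w. gauss_iso_density x s w) \<in> borel_measurable lborel"
  unfolding gauss_iso_density_def by measurable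

lemma gauss_integrable:
  fixes x :: "'a::euclidean_space"
  assumes "s > 0"
  shows "integrable lborel (\<lambda>w. gauss_iso_density x s w)"
proof (rule integrableI_nonneg)
  show "AE w in lborel. 0 \<le> gauss_iso_density x s w" by (simp add: gauss_nonneg)
  show "(\<integral>\<^sup>+w. ennreal (gauss_iso_density x s w) \<partial>lborel) < \<infinity>"
    unfolding gauss_nn[OF assms] by simp
qed (rule gauss_meas_lborel)

lemma gauss_integral:
  fixes x :: "'a::euclidean_space"
  assumes "s > 0"
  shows "(\<integral>w. gauss_iso_density x s w \<partial>lborel) = 1"
proof -
  have "(\<integral>w. gauss_iso_density x s w \<partial>lborel) = enn2real (\<integral>\<^sup>+w. ennreal (gauss_iso_density x s w) \<partial>lborel)"
    by (rule integral_eq_nn_integral) (auto simp: gauss_nonneg)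
  also have "\<dots> = 1" unfolding gauss_nn[OF assms] by simp
  finally show ?thesis .
qed

lemma diff_int:
  fixes f :: "'a::euclidean_space \<Rightarrow> 'b \<Rightarrow> 'c::euclidean_space"
    and f' :: "'a \<Rightarrow> 'b \<Rightarrow> 'a \<Rightarrow> 'c" and B :: "'b \<Rightarrow> real" and N :: "'b measure"
  assumes deriv: "\<And>x w. ((\<lambda>x. f x w) has_derivative f' x w) (at x)"
    and measf: "\<And>x. f x \<in> borel_measurable N"
    and measf': "\<And>h. (\<lambda>w. f' \<mu> w h) \<in> borel_measurable N"
    and int: "\<And>x. integrable N (f x)"
    and bound: "\<And>x w h. x \<in> ball \<mu> 1 \<Longrightarrow> norm (f' x w h) \<le> B w * norm h"
    and intB: "integrable N B"
  shows "((\<lambda>x. \<integral>w. f x w \<partial>N) has_derivative (\<lambda>h. \<integral>w. f' \<mu> w h \<partial>N)) (at \<mu>)"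
proof -
  have lin: "\<And>x w. linear (f' x w)" using deriv has_derivative_linear by blast
  have mu: "\<mu> \<in> ball \<mu> 1" by simp
  have int': "integrable N (\<lambda>w. f' \<mu> w h)" for h
  proof (rule Bochner_Integration.integrable_bound[of N "\<lambda>w. B w * norm h"])
    show "integrable N (\<lambda>w. B w * norm h)" using intB by simp
    show "AE w in N. norm (f' \<mu> w h) \<le> norm (B w * norm h)"
    proof (rule AE_I2)
      fix w
      have "B w * norm h \<le> \<bar>B w\<bar> * norm h" by (simp add: mult_right_mono)
      then show "norm (f' \<mu> w h) \<le> norm (B w * norm h)" using bound[OF mu, of w h] by (simp add: abs_mult)
    qed
  qed (rule measf')
  have bl: "bounded_linear (\<lambda>h. \<integral>w. f' \<mu> w h \<partial>N)"
  proof (rule bounded_linear_intro[where K="\<integral>w. B w \<partial>N"])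
    fix x y show "(\<integral>w. f' \<mu> w (x + y) \<partial>N) = (\<integral>w. f' \<mu> w x \<partial>N) + (\<integral>w. f' \<mu> w y \<partial>N)"
      using int' by (simp add: linear_add[OF lin])
  next
    fix r x show "(\<integral>w. f' \<mu> w (r *\<^sub>R x) \<partial>N) = r *\<^sub>R (\<integral>w. f' \<mu> w x \<partial>N)"
      by (simp add: linear_scale[OF lin])
  next
    fix x
    have "norm (\<integral>w. f' \<mu> w x \<partial>N) \<le> (\<integral>w. B w * norm x \<partial>N)"
    proof -
      have "norm (\<integral>w. f' \<mu> w x \<partial>N) \<le> (\<integral>w. norm (f' \<mu> w x) \<partial>N)" by (rule integral_norm_bound)
      also have "\<dots> \<le> (\<integral>w. B w * norm x \<partial>N)"
        using int' intB bound[OF mu] by (intro Bochner_Integration.integral_mono) auto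
      finally show ?thesis .
    qed
    also have "\<dots> = norm x * (\<integral>w. B w \<partial>N)" by simp
    finally show "norm (\<integral>w. f' \<mu> w x \<partial>N) \<le> norm x * (\<integral>w. B w \<partial>N)" .
  qed
  have Bnn: "0 \<le> B w" for w
  proof -
    obtain b :: 'a where b: "b \<in> Basis" using nonempty_Basis by blast
    have "0 \<le> norm (f' \<mu> w b)" by simp
    also have "\<dots> \<le> B w * norm b" by (rule bound[OF mu])
    finally show ?thesis using b by simp
  qed
  define R where "R h w = norm (f (\<mu> + h) w - f \<mu> w - f' \<mu> w h) / norm h" for h w
  have measR: "R h \<in> borel_measurable N" for h
  proof -
    have m1: "(\<lambda>w. f (\<mu> + h) w - f \<mu> w - f' \<mu> w h) \<in> borel_measurable N"
      by (intro borel_measurable_diff measf measf')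
    have m2: "(\<lambda>w. norm (f (\<mu> + h) w - f \<mu> w - f' \<mu> w h)) \<in> borel_measurable N"
      by (rule measurable_compose[OF m1 borel_measurable_norm])
    show ?thesis unfolding R_def
      by (rule borel_measurable_divide[OF m2 borel_measurable_const])
  qed
  have Rbound: "R h w \<le> 2 * B w" if "h \<in> ball 0 1" for h w
  proof -
    have "norm (f (\<mu> + h) w - f \<mu> w - f' \<mu> w ((\<mu> + h) - \<mu>)) \<le> norm ((\<mu> + h) - \<mu>) * (2 * B w)"
    proof (rule differentiable_bound_linearization[where S="ball \<mu> 1" and f="\<lambda>x. f x w" and f'="\<lambda>x. f' x w"])
      show "\<mu> + t *\<^sub>R (\<mu> + h - \<mu>) \<in> ball \<mu> 1" if "t \<in> {0..1}" for t
      proof -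
        have t: "0 \<le> t" "t \<le> 1" using that by auto
        have "norm (t *\<^sub>R h) = t * norm h" using t by simp
        also have "\<dots> \<le> norm h" using t by (simp add: mult_left_le_one_le)
        also have "\<dots> < 1" using \<open>h \<in> ball 0 1\<close> by simp
        finally show ?thesis by (simp add: dist_norm)
      qed
      show "((\<lambda>x. f x w) has_derivative f' x w) (at x within ball \<mu> 1)" for x
        using deriv has_derivative_at_withinI by blast
      show "onorm (f' x w - f' \<mu> w) \<le> 2 * B w" if "x \<in> ball \<mu> 1" for x
      proof (rule onorm_le)
        fix h
        have "norm (f' x w h - f' \<mu> w h) \<le> norm (f' x w h) + norm (f' \<mu> w h)" by (rule norm_triangle_ineq4)
        also have "\<dots> \<le> 2 * B w * norm h" using bound[OF that, of w h] bound[OF mu, of w h] by simp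
        finally show "norm ((f' x w - f' \<mu> w) h) \<le> 2 * B w * norm h" by simp
      qed
    qed simp
    then show ?thesis unfolding R_def
      using Bnn[of w] by (cases "h = 0") (auto simp: divide_le_eq mult.commute)
  qed
  have Rlim: "((\<lambda>h. R h w) \<longlongrightarrow> 0) (at 0)" for w
    using deriv[of w \<mu>] unfolding has_derivative_at R_def by simp
  have intlim: "((\<lambda>h. \<integral>w. R h w \<partial>N) \<longlongrightarrow> 0) (at 0)"
  proof -
    have "((\<lambda>h. \<integral>w. R h w \<partial>N) \<longlongrightarrow> 0) (at 0 within ball 0 1)"
    proof (subst tendsto_at_iff_sequentially, intro allI impI)
      fix X :: "nat \<Rightarrow> 'a" assume X: "\<forall>i. X i \<in> ball 0 1 - {0}" "X \<longlonglongrightarrow> 0"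
      have "(\<lambda>i. \<integral>w. R (X i) w \<partial>N) \<longlonglongrightarrow> (\<integral>w. 0 \<partial>N)"
      proof (rule integral_dominated_convergence[where w="\<lambda>w. 2 * B w"])
        show "AE w in N. (\<lambda>i. R (X i) w) \<longlonglongrightarrow> 0"
        proof (rule AE_I2)
          fix w
          have all: "\<forall>X. (\<forall>i. X i \<in> UNIV - {0}) \<longrightarrow> X \<longlonglongrightarrow> 0 \<longrightarrow> ((\<lambda>h. R h w) \<circ> X) \<longlonglongrightarrow> 0"
            using Rlim[of w] tendsto_at_iff_sequentially[of "\<lambda>h. R h w" 0 0 UNIV] by simp
          have "\<forall>i. X i \<in> UNIV - {0}" using X(1) by blast
          then have "((\<lambda>h. R h w) \<circ> X) \<longlonglongrightarrow> 0"
            using all X(2) by blast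
          then show "(\<lambda>i. R (X i) w) \<longlonglongrightarrow> 0" by (simp add: comp_def)
        qed
        show "AE w in N. norm (R (X i) w) \<le> 2 * B w" for i
        proof (rule AE_I2)
          fix w
          have "0 \<le> R (X i) w" unfolding R_def by simp
          moreover have "X i \<in> ball 0 1" using X(1) by blast
          ultimately show "norm (R (X i) w) \<le> 2 * B w" using Rbound[of "X i" w] by simp
        qed
        show "(\<lambda>w. 0) \<in> borel_measurable N" by simp
        show "R (X i) \<in> borel_measurable N" for i by (rule measR)
        show "integrable N (\<lambda>w. 2 * B w)" using intB by simp
      qed
      then show "((\<lambda>h. \<integral>w. R h w \<partial>N) \<circ> X) \<longlonglongrightarrow> 0" by (simp add: comp_def)
    qed
    moreover have "at (0::'a) within ball 0 1 = at 0" by (rule at_within_open) auto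
    ultimately show ?thesis by simp
  qed
  have "((\<lambda>h. norm ((\<integral>w. f (\<mu> + h) w \<partial>N) - (\<integral>w. f \<mu> w \<partial>N) - (\<integral>w. f' \<mu> w h \<partial>N)) / norm h) \<longlongrightarrow> 0) (at 0)"
  proof (rule Lim_null_comparison[OF always_eventually intlim], intro allI)
    fix h
    have "norm ((\<integral>w. f (\<mu> + h) w \<partial>N) - (\<integral>w. f \<mu> w \<partial>N) - (\<integral>w. f' \<mu> w h \<partial>N))
        = norm (\<integral>w. f (\<mu> + h) w - f \<mu> w - f' \<mu> w h \<partial>N)"
      using int int' by simp
    also have "\<dots> \<le> (\<integral>w. norm (f (\<mu> + h) w - f \<mu> w - f' \<mu> w h) \<partial>N)"
      by (rule integral_norm_bound)
    finally show "norm (norm ((\<integral>w. f (\<mu> + h) w \<partial>N) - (\<integral>w. f \<mu> w \<partial>N) - (\<integral>w. f' \<mu> w h \<partial>N)) / norm h)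
       \<le> (\<integral>w. R h w \<partial>N)"
      unfolding R_def by (simp add: divide_right_mono)
  qed
  then show ?thesis using bl unfolding has_derivative_at by simp
qed

lemma gauss_deriv:
  fixes x w :: "'a::euclidean_space"
  assumes "s > 0"
  shows "((\<lambda>x. gauss_iso_density x s w) has_derivative
           (\<lambda>h. gauss_iso_density x s w * ((w - x) \<bullet> h / s\<^sup>2))) (at x)"
proof -
  define C where "C = (2 * pi * s\<^sup>2) powr (- real DIM('a) / 2)"
  have eq: "(\<lambda>x. gauss_iso_density x s w) = (\<lambda>x. C * exp (- ((w - x) \<bullet> (w - x)) / (2 * s\<^sup>2)))"
    by (simp add: gauss_iso_density_def C_def power2_norm_eq_inner)
  show ?thesis unfolding eq
    apply (rule derivative_eq_intros refl)+
    using assms by (auto simp: gauss_iso_density_def C_def power2_norm_eq_inner inner_commute field_simps)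
qed

lemma real_bound:
  fixes s r z :: real
  assumes s: "s > 0" and r: "r \<ge> 0" and z: "0 \<le> z" "z \<le> r + 1"
  shows "exp (- r\<^sup>2 / (2 * s\<^sup>2)) * (1 + r + r\<^sup>2 / s\<^sup>2)
         \<le> (6 + 4 * s\<^sup>2) * exp (1 / (4 * s\<^sup>2)) * exp (- z\<^sup>2 / (8 * s\<^sup>2))"
proof -
  define t where "t = r\<^sup>2 / (4 * s\<^sup>2)"
  have s2: "s\<^sup>2 > 0" using s by simp
  have rr: "2 * r \<le> r\<^sup>2 + 1"
  proof -
    have "0 \<le> (r - 1)\<^sup>2" by simp
    then show ?thesis by (simp add: power2_diff)
  qed
  have t0: "t \<ge> 0" unfolding t_def using s2 by simp
  have "1 + r + r\<^sup>2 / s\<^sup>2 \<le> 2 + t * (4 * s\<^sup>2 + 4)"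
  proof -
    have "r \<le> 1 + r\<^sup>2" using rr r by linarith
    moreover have "t * (4 * s\<^sup>2 + 4) = r\<^sup>2 + r\<^sup>2 / s\<^sup>2" unfolding t_def using s2 by (simp add: field_simps)
    ultimately show ?thesis by simp
  qed
  also have "\<dots> \<le> (6 + 4 * s\<^sup>2) * (1 + t)" using t0 s2 by (simp add: algebra_simps)
  also have "\<dots> \<le> (6 + 4 * s\<^sup>2) * exp t" using s2 by (intro mult_left_mono) (auto simp: exp_ge_add_one_self)
  finally have P: "1 + r + r\<^sup>2 / s\<^sup>2 \<le> (6 + 4 * s\<^sup>2) * exp t" .
  have E: "exp (- r\<^sup>2 / (2 * s\<^sup>2)) = exp (- t) * exp (- t)"
    unfolding t_def exp_add[symmetric] using s2 by (simp add: field_simps)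
  have zz: "z\<^sup>2 \<le> 2 * r\<^sup>2 + 2"
  proof -
    have "z\<^sup>2 \<le> (r + 1)\<^sup>2" using z by (intro power_mono) auto
    also have "\<dots> \<le> 2 * r\<^sup>2 + 2" using rr by (simp add: power2_sum)
    finally show ?thesis .
  qed
  have zt: "- t \<le> 1 / (4 * s\<^sup>2) + - z\<^sup>2 / (8 * s\<^sup>2)"
    unfolding t_def using s2 zz by (simp add: field_simps)
  have "exp (- r\<^sup>2 / (2 * s\<^sup>2)) * (1 + r + r\<^sup>2 / s\<^sup>2) \<le> exp (- t) * exp (- t) * ((6 + 4 * s\<^sup>2) * exp t)"
    unfolding E using P by (intro mult_left_mono) auto
  also have "\<dots> = (6 + 4 * s\<^sup>2) * exp (- t)" by (simp add: exp_minus field_simps)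
  also have "\<dots> \<le> (6 + 4 * s\<^sup>2) * exp (1 / (4 * s\<^sup>2) + - z\<^sup>2 / (8 * s\<^sup>2))"
    using zt s2 by (intro mult_left_mono) auto
  finally show ?thesis by (simp add: exp_add[symmetric] mult.assoc)
qed

definition Bnd :: "real \<Rightarrow> 'a::euclidean_space \<Rightarrow> 'a \<Rightarrow> real" where
  "Bnd s x w = (2 * pi * s\<^sup>2) powr (- real DIM('a) / 2) * ((6 + 4 * s\<^sup>2) * exp (1 / (4 * s\<^sup>2)) * exp (- (norm (w - x))\<^sup>2 / (8 * s\<^sup>2)))"

lemma Bnd_ge:
  fixes x y w :: "'a::euclidean_space"
  assumes s: "s > 0" and y: "y \<in> ball x 1"
  shows "gauss_iso_density y s w * (1 + norm (w - y) + (norm (w - y))\<^sup>2 / s\<^sup>2) \<le> Bnd s x w"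
proof -
  have "norm (w - x) \<le> norm (w - y) + 1"
    using y norm_triangle_ineq[of "w - y" "y - x"] by (auto simp: dist_norm norm_minus_commute)
  then have "exp (- (norm (w - y))\<^sup>2 / (2 * s\<^sup>2)) * (1 + norm (w - y) + (norm (w - y))\<^sup>2 / s\<^sup>2)
      \<le> (6 + 4 * s\<^sup>2) * exp (1 / (4 * s\<^sup>2)) * exp (- (norm (w - x))\<^sup>2 / (8 * s\<^sup>2))"
    by (intro real_bound s) auto
  then show ?thesis unfolding gauss_iso_density_def Bnd_def
    by (simp add: mult.assoc mult_left_mono)
qed

lemma Bnd_nonneg: "0 \<le> Bnd s x w"
  unfolding Bnd_def by (intro mult_nonneg_nonneg) (auto intro: add_nonneg_nonneg)

lemma Bnd_meas[measurable]: "Bnd s x \<in> borel_measurable borel"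
  unfolding Bnd_def by measurable

lemma Bnd_int:
  fixes x :: "'a::euclidean_space"
  assumes s: "s > 0"
  shows "integrable lborel (Bnd s x)"
proof -
  define c :: real where "c = (2 * pi * (2 * s)^2) powr (- real DIM('a) / 2)"
  have c: "c > 0" unfolding c_def using s by simp
  have "Bnd s x w = (2 * pi * s\<^sup>2) powr (- real DIM('a) / 2) * ((6 + 4 * s\<^sup>2) * exp (1 / (4 * s\<^sup>2)) / c) * gauss_iso_density x (2 * s) w" for w
    unfolding Bnd_def gauss_iso_density_def c_def[symmetric] using c by (simp add: field_simps power_mult_distrib)
  then have "Bnd s x = (\<lambda>w. (2 * pi * s\<^sup>2) powr (- real DIM('a) / 2) * ((6 + 4 * s\<^sup>2) * exp (1 / (4 * s\<^sup>2)) / c) * gauss_iso_density x (2 * s) w)"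
    by (rule ext)
  then show ?thesis using gauss_integrable[of "2 * s" x] s by simp
qed

lemma P_ge:
  fixes x y w :: "'a::euclidean_space"
  assumes s: "s > 0" and y: "y \<in> ball x 1"
  shows "gauss_iso_density y s w * norm (w - y) \<le> Bnd s x w"
    and "gauss_iso_density y s w * (1 + (norm (w - y))\<^sup>2 / s\<^sup>2) \<le> Bnd s x w"
proof -
  have g: "0 \<le> gauss_iso_density y s w" by (rule gauss_nonneg)
  have "gauss_iso_density y s w * norm (w - y) \<le> gauss_iso_density y s w * (1 + norm (w - y) + (norm (w - y))\<^sup>2 / s\<^sup>2)"
    using g by (intro mult_left_mono) auto
  then show "gauss_iso_density y s w * norm (w - y) \<le> Bnd s x w" using Bnd_ge[OF s y, of w] by linarith
  have "gauss_iso_density y s w * (1 + (norm (w - y))\<^sup>2 / s\<^sup>2) \<le> gauss_iso_density y s w * (1 + norm (w - y) + (norm (w - y))\<^sup>2 / s\<^sup>2)"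
    using g by (intro mult_left_mono) auto
  then show "gauss_iso_density y s w * (1 + (norm (w - y))\<^sup>2 / s\<^sup>2) \<le> Bnd s x w" using Bnd_ge[OF s y, of w] by linarith
qed

context
  fixes k :: "'a::euclidean_space \<Rightarrow> real" and s M :: real
  assumes s: "s > 0" and kmeas[measurable]: "k \<in> borel_measurable lborel"
    and kb: "\<And>w. 0 \<le> k w \<and> k w \<le> M"
begin

definition "f1 x w = gauss_iso_density x s w * k w"
definition "f1' x w h = gauss_iso_density x s w * ((w - x) \<bullet> h / s\<^sup>2) * k w"
definition "f2 x w = (gauss_iso_density x s w * (k w / s\<^sup>2)) *\<^sub>R (w - x)"
definition "f2' x w h = (gauss_iso_density x s w * (k w / s\<^sup>2)) *\<^sub>R (((w - x) \<bullet> h / s\<^sup>2) *\<^sub>R (w - x) - h)"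

lemma k0: "0 \<le> k w" and kM: "k w \<le> M" using kb by auto

lemma f1'_bound:
  assumes x: "x \<in> ball \<mu> 1"
  shows "norm (f1' x w h) \<le> (M / s\<^sup>2 * Bnd s \<mu> w) * norm h"
proof -
  let ?g = "gauss_iso_density x s w" and ?r = "norm (w - x)"
  have g: "0 \<le> ?g" by (rule gauss_nonneg)
  have "norm (f1' x w h) = ?g * \<bar>(w - x) \<bullet> h\<bar> * k w / s\<^sup>2"
    unfolding f1'_def using g k0[of w] by (simp add: abs_mult)
  also have "\<dots> \<le> ?g * (?r * norm h) * M / s\<^sup>2"
    using g k0[of w] kM[of w] Cauchy_Schwarz_ineq2[of "w - x" h]
    by (intro divide_right_mono mult_mono mult_left_mono) auto
  also have "\<dots> = (M / s\<^sup>2) * norm h * (?g * ?r)" by (simp add: field_simps)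
  also have "\<dots> \<le> (M / s\<^sup>2) * norm h * Bnd s \<mu> w"
    using P_ge(1)[OF s x, of w] kM[of w] k0[of w] by (intro mult_left_mono) auto
  finally show ?thesis by (simp add: mult_ac)
qed

lemma f2'_bound:
  assumes x: "x \<in> ball \<mu> 1"
  shows "norm (f2' x w h) \<le> (M / s\<^sup>2 * Bnd s \<mu> w) * norm h"
proof -
  let ?g = "gauss_iso_density x s w" and ?r = "norm (w - x)"
  have g: "0 \<le> ?g" by (rule gauss_nonneg)
  have n: "norm (((w - x) \<bullet> h / s\<^sup>2) *\<^sub>R (w - x) - h) \<le> (1 + ?r\<^sup>2 / s\<^sup>2) * norm h"
  proof -
    have "norm (((w - x) \<bullet> h / s\<^sup>2) *\<^sub>R (w - x) - h) \<le> norm (((w - x) \<bullet> h / s\<^sup>2) *\<^sub>R (w - x)) + norm h"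
      by (rule norm_triangle_ineq4)
    also have "norm (((w - x) \<bullet> h / s\<^sup>2) *\<^sub>R (w - x)) = \<bar>(w - x) \<bullet> h\<bar> * ?r / s\<^sup>2" by simp
    also have "\<dots> \<le> (?r * norm h) * ?r / s\<^sup>2"
      using Cauchy_Schwarz_ineq2[of "w - x" h] by (intro divide_right_mono mult_right_mono) auto
    finally show ?thesis by (simp add: field_simps power2_eq_square)
  qed
  have "norm (f2' x w h) = ?g * k w / s\<^sup>2 * norm (((w - x) \<bullet> h / s\<^sup>2) *\<^sub>R (w - x) - h)"
    unfolding f2'_def using g k0[of w] by simp
  also have "\<dots> \<le> ?g * M / s\<^sup>2 * ((1 + ?r\<^sup>2 / s\<^sup>2) * norm h)"
    using g k0[of w] kM[of w] n by (intro mult_mono divide_right_mono mult_left_mono) auto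
  also have "\<dots> = (M / s\<^sup>2) * norm h * (?g * (1 + ?r\<^sup>2 / s\<^sup>2))" by (simp add: field_simps)
  also have "\<dots> \<le> (M / s\<^sup>2) * norm h * Bnd s \<mu> w"
    using P_ge(2)[OF s x, of w] kM[of w] k0[of w] by (intro mult_left_mono) auto
  finally show ?thesis by (simp add: mult_ac)
qed

lemma f2_bound: "norm (f2 x w) \<le> M / s\<^sup>2 * Bnd s x w"
proof -
  let ?g = "gauss_iso_density x s w" and ?r = "norm (w - x)"
  have g: "0 \<le> ?g" by (rule gauss_nonneg)
  have "norm (f2 x w) = ?g * k w / s\<^sup>2 * ?r" unfolding f2_def using g k0[of w] by simp
  also have "\<dots> \<le> ?g * M / s\<^sup>2 * ?r" using g kM[of w] by (intro mult_right_mono divide_right_mono mult_left_mono) auto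
  also have "\<dots> = (M / s\<^sup>2) * (?g * ?r)" by simp
  also have "\<dots> \<le> (M / s\<^sup>2) * Bnd s x w"
    using P_ge(1)[OF s, of x x w] kM[of w] k0[of w] by (intro mult_left_mono) auto
  finally show ?thesis .
qed

lemma f1_meas[measurable]: "f1 x \<in> borel_measurable lborel" unfolding f1_def by measurable
lemma f2_meas[measurable]: "f2 x \<in> borel_measurable lborel" unfolding f2_def by measurable
lemma f1'_meas[measurable]: "(\<lambda>w. f1' x w h) \<in> borel_measurable lborel" unfolding f1'_def by measurable
lemma f2'_meas[measurable]: "(\<lambda>w. f2' x w h) \<in> borel_measurable lborel" unfolding f2'_def by measurable

lemma M0: "0 \<le> M" using kb[of 0] by linarith

lemma f2_int: "integrable lborel (f2 x)"
proof (rule Bochner_Integration.integrable_bound[of _ "\<lambda>w. M / s\<^sup>2 * Bnd s x w"])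
  show "integrable lborel (\<lambda>w. M / s\<^sup>2 * Bnd s x w)" using Bnd_int[OF s, of x] by simp
  show "AE w in lborel. norm (f2 x w) \<le> norm (M / s\<^sup>2 * Bnd s x w)"
  proof (rule AE_I2)
    fix w
    have "0 \<le> M / s\<^sup>2 * Bnd s x w" using M0 Bnd_nonneg[of s x w] by simp
    then have e: "norm (M / s\<^sup>2 * Bnd s x w) = M / s\<^sup>2 * Bnd s x w" unfolding real_norm_def by (rule abs_of_nonneg)
    show "norm (f2 x w) \<le> norm (M / s\<^sup>2 * Bnd s x w)" unfolding e by (rule f2_bound)
  qed
qed (rule f2_meas)

lemma f2'_int: "integrable lborel (\<lambda>w. f2' x w h)"
proof (rule Bochner_Integration.integrable_bound[of _ "\<lambda>w. M / s\<^sup>2 * Bnd s x w * norm h"])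
  show "integrable lborel (\<lambda>w. M / s\<^sup>2 * Bnd s x w * norm h)" using Bnd_int[OF s, of x] by simp
  show "AE w in lborel. norm (f2' x w h) \<le> norm (M / s\<^sup>2 * Bnd s x w * norm h)"
  proof (rule AE_I2)
    fix w
    have "0 \<le> M / s\<^sup>2 * Bnd s x w * norm h" using M0 Bnd_nonneg[of s x w] by simp
    then have e: "norm (M / s\<^sup>2 * Bnd s x w * norm h) = M / s\<^sup>2 * Bnd s x w * norm h" unfolding real_norm_def by (rule abs_of_nonneg)
    show "norm (f2' x w h) \<le> norm (M / s\<^sup>2 * Bnd s x w * norm h)" unfolding e by (rule f2'_bound) simp
  qed
qed (rule f2'_meas)

lemma f1_int: "integrable lborel (f1 x)"
proof (rule Bochner_Integration.integrable_bound[of _ "\<lambda>w. M * gauss_iso_density x s w"])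
  show "integrable lborel (\<lambda>w. M * gauss_iso_density x s w)" using gauss_integrable[OF s, of x] by simp
  show "AE w in lborel. norm (f1 x w) \<le> norm (M * gauss_iso_density x s w)"
  proof (rule AE_I2)
    fix w
    have g: "0 \<le> gauss_iso_density x s w" by (rule gauss_nonneg)
    have "norm (f1 x w) = gauss_iso_density x s w * k w" unfolding f1_def using g k0[of w] by simp
    also have "\<dots> \<le> gauss_iso_density x s w * M" using g kM[of w] by (simp add: mult_left_mono)
    finally show "norm (f1 x w) \<le> norm (M * gauss_iso_density x s w)" using g M0 by (simp add: mult.commute)
  qed
qed (rule f1_meas)

lemma f1_deriv: "((\<lambda>x. f1 x w) has_derivative f1' x w) (at x)"
  unfolding f1_def[abs_def] f1'_def[abs_def]
  by (rule has_derivative_mult_left[OF gauss_deriv[OF s]])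

lemma f2_deriv: "((\<lambda>x. f2 x w) has_derivative f2' x w) (at x)"
proof -
  have A: "((\<lambda>x. gauss_iso_density x s w * (k w / s\<^sup>2)) has_derivative
      (\<lambda>h. gauss_iso_density x s w * ((w - x) \<bullet> h / s\<^sup>2) * (k w / s\<^sup>2))) (at x)"
    by (rule has_derivative_mult_left[OF gauss_deriv[OF s]])
  have B: "((\<lambda>x. w - x) has_derivative (\<lambda>h. 0 - h)) (at x)"
    by (intro has_derivative_diff has_derivative_const has_derivative_ident)
  have "((\<lambda>x. (gauss_iso_density x s w * (k w / s\<^sup>2)) *\<^sub>R (w - x)) has_derivative
      (\<lambda>h. (gauss_iso_density x s w * (k w / s\<^sup>2)) *\<^sub>R (0 - h) +
            (gauss_iso_density x s w * ((w - x) \<bullet> h / s\<^sup>2) * (k w / s\<^sup>2)) *\<^sub>R (w - x))) (at x)"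
    by (rule has_derivative_scaleR[OF A B])
  then show ?thesis unfolding f2_def[abs_def]
    by (rule has_derivative_eq_rhs) (simp add: fun_eq_iff f2'_def scaleR_right_diff_distrib mult_ac)
qed

lemma grad: "((\<lambda>x. \<integral>w. f1 x w \<partial>lborel) has_derivative (\<lambda>h. h \<bullet> (\<integral>w. f2 \<mu> w \<partial>lborel))) (at \<mu>)"
proof -
  have "((\<lambda>x. \<integral>w. f1 x w \<partial>lborel) has_derivative (\<lambda>h. \<integral>w. f1' \<mu> w h \<partial>lborel)) (at \<mu>)"
  proof (rule diff_int[where B="\<lambda>w. M / s\<^sup>2 * Bnd s \<mu> w"])
    show "integrable lborel (\<lambda>w. M / s\<^sup>2 * Bnd s \<mu> w)" using Bnd_int[OF s, of \<mu>] by simp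
    show "norm (f1' x w h) \<le> (M / s\<^sup>2 * Bnd s \<mu> w) * norm h" if "x \<in> ball \<mu> 1" for x w h
      using that by (rule f1'_bound)
  qed (auto intro: f1_deriv f1_meas f1'_meas f1_int)
  moreover have "(\<integral>w. f1' \<mu> w h \<partial>lborel) = h \<bullet> (\<integral>w. f2 \<mu> w \<partial>lborel)" for h
  proof -
    have "f1' \<mu> w h = h \<bullet> f2 \<mu> w" for w
      unfolding f1'_def f2_def inner_scaleR_right by (simp add: inner_commute)
    then have "(\<integral>w. f1' \<mu> w h \<partial>lborel) = (\<integral>w. h \<bullet> f2 \<mu> w \<partial>lborel)" by simp
    also have "\<dots> = h \<bullet> (\<integral>w. f2 \<mu> w \<partial>lborel)" using f2_int by simp
    finally show ?thesis .
  qed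
  ultimately show ?thesis by simp
qed

lemma hess: "((\<lambda>x. \<integral>w. f2 x w \<partial>lborel) has_derivative (\<lambda>h. \<integral>w. f2' \<mu> w h \<partial>lborel)) (at \<mu>)"
proof (rule diff_int[where B="\<lambda>w. M / s\<^sup>2 * Bnd s \<mu> w"])
  show "integrable lborel (\<lambda>w. M / s\<^sup>2 * Bnd s \<mu> w)" using Bnd_int[OF s, of \<mu>] by simp
  show "norm (f2' x w h) \<le> (M / s\<^sup>2 * Bnd s \<mu> w) * norm h" if "x \<in> ball \<mu> 1" for x w h
    using that by (rule f2'_bound)
qed (auto intro: f2_deriv f2_meas f2'_meas f2_int)

end

lemma moment:
  fixes \<mu> v :: "'a::euclidean_space"
  assumes s: "s > 0"
  shows "integrable lborel (\<lambda>w. gauss_iso_density \<mu> s w * ((w - \<mu>) \<bullet> v)\<^sup>2)"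
    and "(\<integral>w. gauss_iso_density \<mu> s w * ((w - \<mu>) \<bullet> v)\<^sup>2 \<partial>lborel) = s\<^sup>2 * (norm v)\<^sup>2"
proof -
  let ?k = "\<lambda>_::'a. 1::real"
  have km: "?k \<in> borel_measurable lborel" by simp
  have kb: "\<And>w. 0 \<le> ?k w \<and> ?k w \<le> 1" by simp
  note G = grad[OF s km kb] and H = hess[OF s km kb] and I2' = f2'_int[OF s km kb]
  have f1e: "f1 ?k s x w = gauss_iso_density x s w" for x w using f1_def[OF s km kb] by simp
  have one: "(\<lambda>x. \<integral>w. f1 ?k s x w \<partial>lborel) = (\<lambda>x. 1)" by (simp add: f1e gauss_integral[OF s])
  have G0: "(\<integral>w. f2 ?k s x w \<partial>lborel) = 0" for x
  proof -
    have "((\<lambda>x. 1::real) has_derivative (\<lambda>h. h \<bullet> (\<integral>w. f2 ?k s x w \<partial>lborel))) (at x)"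
      using G[of x] unfolding one .
    moreover have "((\<lambda>x. 1::real) has_derivative (\<lambda>h. 0)) (at x)" by simp
    ultimately have fe: "(\<lambda>h. h \<bullet> (\<integral>w. f2 ?k s x w \<partial>lborel)) = (\<lambda>h. 0)" by (rule has_derivative_unique)
    have "(\<integral>w. f2 ?k s x w \<partial>lborel) \<bullet> (\<integral>w. f2 ?k s x w \<partial>lborel) = 0"
      using fun_cong[OF fe, of "\<integral>w. f2 ?k s x w \<partial>lborel"] by simp
    then show ?thesis by simp
  qed
  have D0: "(\<integral>w. f2' ?k s \<mu> w v \<partial>lborel) = 0"
  proof -
    have "((\<lambda>x. \<integral>w. f2 ?k s x w \<partial>lborel) has_derivative (\<lambda>h. \<integral>w. f2' ?k s \<mu> w h \<partial>lborel)) (at \<mu>)"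
      by (rule H)
    then have "((\<lambda>x. 0::'a) has_derivative (\<lambda>h. \<integral>w. f2' ?k s \<mu> w h \<partial>lborel)) (at \<mu>)"
      by (simp add: G0)
    moreover have "((\<lambda>x. 0::'a) has_derivative (\<lambda>h. 0)) (at \<mu>)" by simp
    ultimately have fe: "(\<lambda>h. \<integral>w. f2' ?k s \<mu> w h \<partial>lborel) = (\<lambda>h. 0)" by (rule has_derivative_unique)
    show ?thesis using fun_cong[OF fe, of v] by simp
  qed
  define X where "X w = f2' ?k s \<mu> w v \<bullet> v" for w
  have intX: "integrable lborel X" unfolding X_def using I2'[of \<mu> v] by (rule integrable_inner_left)
  have X0: "(\<integral>w. X w \<partial>lborel) = 0" unfolding X_def using I2'[of \<mu> v] D0 by simp
  have pt: "gauss_iso_density \<mu> s w * ((w - \<mu>) \<bullet> v)\<^sup>2 = s^4 * X w + s\<^sup>2 * (norm v)\<^sup>2 * gauss_iso_density \<mu> s w" for w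
  proof -
    have Xw: "X w = (gauss_iso_density \<mu> s w * (1 / s\<^sup>2)) * (((w - \<mu>) \<bullet> v / s\<^sup>2) * ((w - \<mu>) \<bullet> v) - (norm v)\<^sup>2)"
      unfolding X_def f2'_def[OF s km kb] by (simp only: inner_scaleR_left inner_diff_left power2_norm_eq_inner)
    have alg: "g * t\<^sup>2 = s^4 * ((g * (1 / s\<^sup>2)) * (t / s\<^sup>2 * t - n)) + s\<^sup>2 * n * g" for g t n :: real
      using s by (simp add: field_simps power2_eq_square power4_eq_xxxx)
    show ?thesis unfolding Xw by (rule alg)
  qed
  have eq: "(\<lambda>w. gauss_iso_density \<mu> s w * ((w - \<mu>) \<bullet> v)\<^sup>2) = (\<lambda>w. s^4 * X w + s\<^sup>2 * (norm v)\<^sup>2 * gauss_iso_density \<mu> s w)"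
    using pt by (rule ext)
  show "integrable lborel (\<lambda>w. gauss_iso_density \<mu> s w * ((w - \<mu>) \<bullet> v)\<^sup>2)"
    unfolding eq using intX gauss_integrable[OF s, of \<mu>] by simp
  have "(\<integral>w. gauss_iso_density \<mu> s w * ((w - \<mu>) \<bullet> v)\<^sup>2 \<partial>lborel) = (\<integral>w. s^4 * X w + s\<^sup>2 * (norm v)\<^sup>2 * gauss_iso_density \<mu> s w \<partial>lborel)"
    unfolding eq ..
  also have "\<dots> = s^4 * (\<integral>w. X w \<partial>lborel) + s\<^sup>2 * (norm v)\<^sup>2 * (\<integral>w. gauss_iso_density \<mu> s w \<partial>lborel)"
    using intX gauss_integrable[OF s, of \<mu>] by simp
  also have "\<dots> = s\<^sup>2 * (norm v)\<^sup>2" using X0 gauss_integral[OF s, of \<mu>] by simp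
  finally show "(\<integral>w. gauss_iso_density \<mu> s w * ((w - \<mu>) \<bullet> v)\<^sup>2 \<partial>lborel) = s\<^sup>2 * (norm v)\<^sup>2" .
qed

theorem lemma1:
  fixes k :: "'a::euclidean_space \<Rightarrow> real" and \<sigma> M :: real and g :: "'a \<Rightarrow> real"
  assumes "\<sigma> > 0" and "M > 0"
    and "k \<in> borel_measurable lborel"
    and "\<And>w. 0 \<le> k w \<and> k w \<le> M"
    and "AE w in lborel. isCont k w"
    and "\<And>\<mu>. g \<mu> = (\<integral>w. gauss_iso_density \<mu> \<sigma> w * k w \<partial>lborel)"
  shows "\<exists>G. (\<forall>\<mu>. GDERIV g \<mu> :> G \<mu>) \<and> (\<forall>\<mu>. G differentiable at \<mu>) \<and>
           (\<forall>\<mu>1 \<mu>2. frechet_derivative G (at \<mu>2) (G \<mu>1) \<bullet> G \<mu>1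
                       \<le> real DIM('a) * M ^ 3 / \<sigma> ^ 4)"
proof -
  note s = assms(1) and km = assms(3) and kb = assms(4)
  have M0: "0 \<le> M" using assms(2) by simp
  have k0: "0 \<le> k w" and kM: "k w \<le> M" for w using kb[of w] by auto
  define G where "G = (\<lambda>\<mu>. \<integral>w. f2 k \<sigma> \<mu> w \<partial>lborel)"
  define D where "D = (\<lambda>\<mu> h. \<integral>w. f2' k \<sigma> \<mu> w h \<partial>lborel)"
  have geq: "g = (\<lambda>x. \<integral>w. f1 k \<sigma> x w \<partial>lborel)"
    using assms(6) by (simp add: fun_eq_iff f1_def[OF s km kb])
  have gd: "GDERIV g \<mu> :> G \<mu>" for \<mu>
    unfolding gderiv_def geq G_def using grad[OF s km kb, of \<mu>] .
  have hd: "(G has_derivative D \<mu>) (at \<mu>)" for \<mu>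
    unfolding G_def D_def by (rule hess[OF s km kb])
  have fd: "frechet_derivative G (at \<mu>) = D \<mu>" for \<mu>
    using frechet_derivative_at[OF hd[of \<mu>]] by simp
  have I2: "integrable lborel (f2 k \<sigma> x)" for x by (rule f2_int[OF s km kb])
  have I2': "integrable lborel (\<lambda>w. f2' k \<sigma> x w h)" for x h by (rule f2'_int[OF s km kb])
  note gI = gauss_integrable[OF s] and gint = gauss_integral[OF s]
  have s2: "\<sigma>\<^sup>2 > 0" using s by simp
  have hbound: "D \<mu> v \<bullet> v \<le> M * (norm v)\<^sup>2 / \<sigma>\<^sup>2" for \<mu> v
  proof -
    let ?g = "\<lambda>w. gauss_iso_density \<mu> \<sigma> w" and ?t = "\<lambda>w. (w - \<mu>) \<bullet> v"
    have "D \<mu> v \<bullet> v = (\<integral>w. f2' k \<sigma> \<mu> w v \<bullet> v \<partial>lborel)"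
      unfolding D_def using I2'[of \<mu> v] by simp
    also have "\<dots> \<le> (\<integral>w. (M / \<sigma>^4) * (?g w * (?t w)\<^sup>2) \<partial>lborel)"
    proof (rule Bochner_Integration.integral_mono)
      show "integrable lborel (\<lambda>w. f2' k \<sigma> \<mu> w v \<bullet> v)" using I2'[of \<mu> v] by simp
      show "integrable lborel (\<lambda>w. (M / \<sigma>^4) * (?g w * (?t w)\<^sup>2))" using moment(1)[OF s, of \<mu> v] by simp
      fix w
      have g0: "0 \<le> ?g w" by (rule gauss_nonneg)
      have e: "f2' k \<sigma> \<mu> w v \<bullet> v = (?g w * (k w / \<sigma>\<^sup>2)) * (?t w / \<sigma>\<^sup>2 * ?t w - (norm v)\<^sup>2)"
        unfolding f2'_def[OF s km kb] by (simp only: inner_scaleR_left inner_diff_left power2_norm_eq_inner)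
      have "(?g w * (k w / \<sigma>\<^sup>2)) * (?t w / \<sigma>\<^sup>2 * ?t w - (norm v)\<^sup>2) \<le> (?g w * (k w / \<sigma>\<^sup>2)) * (?t w / \<sigma>\<^sup>2 * ?t w)"
        using g0 k0[of w] s2 by (intro mult_left_mono) auto
      also have "\<dots> = (k w / \<sigma>^4) * (?g w * (?t w)\<^sup>2)"
        using s2 by (simp add: field_simps power2_eq_square power4_eq_xxxx)
      also have "\<dots> \<le> (M / \<sigma>^4) * (?g w * (?t w)\<^sup>2)"
        using g0 kM[of w] s by (intro mult_right_mono divide_right_mono) auto
      finally show "f2' k \<sigma> \<mu> w v \<bullet> v \<le> (M / \<sigma>^4) * (?g w * (?t w)\<^sup>2)" unfolding e .
    qed
    also have "\<dots> = (M / \<sigma>^4) * (\<sigma>\<^sup>2 * (norm v)\<^sup>2)"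
      using moment(2)[OF s, of \<mu> v] by simp
    also have "\<dots> = M * (norm v)\<^sup>2 / \<sigma>\<^sup>2"
      using s2 by (simp add: field_simps power2_eq_square power4_eq_xxxx)
    finally show ?thesis .
  qed
  have gbound: "(norm (G \<mu>))\<^sup>2 \<le> M\<^sup>2 / \<sigma>\<^sup>2" for \<mu>
  proof (cases "G \<mu> = 0")
    case True then show ?thesis by simp
  next
    case False
    define v where "v = G \<mu>"
    have nv: "norm v > 0" using False unfolding v_def by simp
    define a where "a = \<sigma> * norm v"
    have a: "a > 0" unfolding a_def using s nv by simp
    let ?g = "\<lambda>w. gauss_iso_density \<mu> \<sigma> w" and ?t = "\<lambda>w. (w - \<mu>) \<bullet> v"
    have "(norm v)\<^sup>2 = v \<bullet> v" by (simp add: power2_norm_eq_inner)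
    also have "\<dots> = (\<integral>w. f2 k \<sigma> \<mu> w \<bullet> v \<partial>lborel)"
      unfolding v_def G_def using I2[of \<mu>] by simp
    also have "\<dots> \<le> (\<integral>w. (M / (\<sigma>\<^sup>2 * (2 * a))) * (?g w * (?t w)\<^sup>2) + (M * a / (2 * \<sigma>\<^sup>2)) * ?g w \<partial>lborel)"
    proof (rule Bochner_Integration.integral_mono)
      show "integrable lborel (\<lambda>w. f2 k \<sigma> \<mu> w \<bullet> v)" using I2[of \<mu>] by simp
      show "integrable lborel (\<lambda>w. (M / (\<sigma>\<^sup>2 * (2 * a))) * (?g w * (?t w)\<^sup>2) + (M * a / (2 * \<sigma>\<^sup>2)) * ?g w)"
        using moment(1)[OF s, of \<mu> v] gI[of \<mu>] by simp
      fix w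
      have g0: "0 \<le> ?g w" by (rule gauss_nonneg)
      have e: "f2 k \<sigma> \<mu> w \<bullet> v = (?g w / \<sigma>\<^sup>2) * (k w * ?t w)"
        unfolding f2_def[OF s km kb] inner_scaleR_left by (simp add: field_simps)
      have am: "\<bar>?t w\<bar> \<le> (?t w)\<^sup>2 / (2 * a) + a / 2"
      proof -
        have "0 \<le> (\<bar>?t w\<bar> - a)\<^sup>2" by simp
        then have "2 * a * \<bar>?t w\<bar> \<le> (?t w)\<^sup>2 + a\<^sup>2" by (simp add: power2_diff mult_ac)
        then show ?thesis using a by (simp add: field_simps power2_eq_square)
      qed
      have "k w * ?t w \<le> k w * \<bar>?t w\<bar>" using k0[of w] by (intro mult_left_mono) auto
      also have "\<dots> \<le> M * \<bar>?t w\<bar>" using kM[of w] by (intro mult_right_mono) auto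
      also have "\<dots> \<le> M * ((?t w)\<^sup>2 / (2 * a) + a / 2)" using am M0 by (intro mult_left_mono) auto
      finally have kt: "k w * ?t w \<le> M * ((?t w)\<^sup>2 / (2 * a) + a / 2)" .
      have "(?g w / \<sigma>\<^sup>2) * (k w * ?t w) \<le> (?g w / \<sigma>\<^sup>2) * (M * ((?t w)\<^sup>2 / (2 * a) + a / 2))"
        using kt g0 s2 by (intro mult_left_mono) auto
      also have "\<dots> = (M / (\<sigma>\<^sup>2 * (2 * a))) * (?g w * (?t w)\<^sup>2) + (M * a / (2 * \<sigma>\<^sup>2)) * ?g w"
        using a s2 by (simp add: field_simps)
      finally show "f2 k \<sigma> \<mu> w \<bullet> v \<le> (M / (\<sigma>\<^sup>2 * (2 * a))) * (?g w * (?t w)\<^sup>2) + (M * a / (2 * \<sigma>\<^sup>2)) * ?g w"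
        unfolding e .
    qed
    also have "\<dots> = (M / (\<sigma>\<^sup>2 * (2 * a))) * (\<sigma>\<^sup>2 * (norm v)\<^sup>2) + (M * a / (2 * \<sigma>\<^sup>2))"
      using moment(1,2)[OF s, of \<mu> v] gI[of \<mu>] gint[of \<mu>] by simp
    also have "\<dots> = M * norm v / \<sigma>"
      unfolding a_def using s nv by (simp add: field_simps power2_eq_square)
    finally have "(norm v)\<^sup>2 \<le> M * norm v / \<sigma>" .
    then have nn: "norm v * norm v \<le> (M / \<sigma>) * norm v" by (simp add: power2_eq_square)
    have "norm v \<le> M / \<sigma>" using mult_right_le_imp_le[OF nn nv] .
    then have "(norm v)\<^sup>2 \<le> (M / \<sigma>)\<^sup>2" using nv by (intro power_mono) auto
    then show ?thesis unfolding v_def by (simp add: power_divide)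
  qed
  have final: "frechet_derivative G (at \<mu>2) (G \<mu>1) \<bullet> G \<mu>1 \<le> real DIM('a) * M ^ 3 / \<sigma> ^ 4" for \<mu>1 \<mu>2
  proof -
    have "frechet_derivative G (at \<mu>2) (G \<mu>1) \<bullet> G \<mu>1 = D \<mu>2 (G \<mu>1) \<bullet> G \<mu>1" by (simp add: fd)
    also have "\<dots> \<le> M * (norm (G \<mu>1))\<^sup>2 / \<sigma>\<^sup>2" by (rule hbound)
    also have "\<dots> \<le> M * (M\<^sup>2 / \<sigma>\<^sup>2) / \<sigma>\<^sup>2"
      using gbound[of \<mu>1] M0 s2 by (intro divide_right_mono mult_left_mono) auto
    also have "\<dots> = 1 * (M ^ 3 / \<sigma> ^ 4)" by (simp add: field_simps power2_eq_square power4_eq_xxxx power3_eq_cube)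
    also have "\<dots> \<le> real DIM('a) * (M ^ 3 / \<sigma> ^ 4)"
      using M0 s by (intro mult_right_mono) (auto simp: DIM_positive Suc_le_eq)
    finally show ?thesis by simp
  qed
  show ?thesis
    by (rule exI[of _ G]) (use gd hd final in \<open>auto simp: differentiable_def\<close>)
qed

end
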